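(* Let $\alpha\in\mathbb{C}^N$. For any distinct $i,j,k\in\{1,\dots,N\}$, $$\partial_kM_{i,j}(\alpha)-\partial_iM_{j,k}(\alpha)=-\alpha_j\frac{x_k-x_i}{(x_i-x_j)(x_j-x_k)}M_{i,k}(\alpha)-\frac{\alpha_k}{x_j-x_k}M_{i,j}(\alpha)-\frac{\alpha_i}{x_i-x_j}M_{j,k}(\alpha).$$ Moreover, if $\alpha_j\ne 0$ for all $1\le j\le N$, the left ideal $\mathcal{I}(\alpha)\subset\mathcal{R}$ generated by all $M_{p,q}(\alpha)$, $1\le p\ne q\le N$, is generated by $M_{1,2}(\alpha),M_{2,3}(\alpha),\dots,M_{N-1,N}(\alpha)$.
   Context: $x=(x_1,\dots,x_N)$, $\partial_p=\partial/\partial x_p$. $\mathcal{R}=\mathbb{C}[x_1,\dots,x_N,\prod_{a<b}(x_a-x_b)^{-1}]\langle\partial_1,\dots,\partial_N\rangle$ is the ring of differential operators with coefficients in the localization of the polynomial ring at $\prod_{a<b}(x_a-x_b)$. For $p\ne q$: $M_{p,q}(\alpha)=\partial_p\partial_q+\frac{\alpha_q}{x_p-x_q}\partial_p+\frac{\alpha_p}{x_q-x_p}\partial_q$ (note $M_{p,q}(\alpha)=M_{q,p}(\alpha)$). *)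

theory Defs
  imports "HOL-Analysis.Analysis"
begin

type_synonym pt = "nat \<Rightarrow> complex"
type_synonym fn = "pt \<Rightarrow> complex"
type_synonym dop = "fn \<Rightarrow> fn"

definition pd :: "nat \<Rightarrow> fn \<Rightarrow> fn" where
  "pd p f = (\<lambda>x. deriv (\<lambda>t. f (x(p := t))) (x p))"

definition Ureg :: "nat \<Rightarrow> pt set" where
  "Ureg N = {x. \<forall>a\<in>{1..N}. \<forall>b\<in>{1..N}. a \<noteq> b \<longrightarrow> x a \<noteq> x b}"

text \<open>The coefficient ring C[x_1..x_N, prod (x_a-x_b)^-1], realised as functions.\<close>
inductive_set coeff_ring :: "nat \<Rightarrow> fn set" for N where
  const: "(\<lambda>x. c) \<in> coeff_ring N"
| var: "i \<in> {1..N} \<Longrightarrow> (\<lambda>x. x i) \<in> coeff_ring N"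
| inv: "a \<in> {1..N} \<Longrightarrow> b \<in> {1..N} \<Longrightarrow> a \<noteq> b \<Longrightarrow> (\<lambda>x. 1 / (x a - x b)) \<in> coeff_ring N"
| add: "f \<in> coeff_ring N \<Longrightarrow> g \<in> coeff_ring N \<Longrightarrow> (\<lambda>x. f x + g x) \<in> coeff_ring N"
| mult: "f \<in> coeff_ring N \<Longrightarrow> g \<in> coeff_ring N \<Longrightarrow> (\<lambda>x. f x * g x) \<in> coeff_ring N"

definition mulop :: "fn \<Rightarrow> dop" where
  "mulop f = (\<lambda>g x. f x * g x)"

text \<open>The ring R of differential operators, realised as operators on functions.\<close>
inductive_set diffops :: "nat \<Rightarrow> dop set" for N where
  coeff: "f \<in> coeff_ring N \<Longrightarrow> mulop f \<in> diffops N"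
| der: "p \<in> {1..N} \<Longrightarrow> pd p \<in> diffops N"
| add: "P \<in> diffops N \<Longrightarrow> Q \<in> diffops N \<Longrightarrow> (\<lambda>g x. P g x + Q g x) \<in> diffops N"
| comp: "P \<in> diffops N \<Longrightarrow> Q \<in> diffops N \<Longrightarrow> P \<circ> Q \<in> diffops N"

text \<open>Equality in R: via the faithful action of R on its coefficient ring (on the regular set).\<close>
definition op_eq :: "nat \<Rightarrow> dop \<Rightarrow> dop \<Rightarrow> bool" where
  "op_eq N P Q \<longleftrightarrow> (\<forall>g\<in>coeff_ring N. \<forall>x\<in>Ureg N. P g x = Q g x)"

inductive_set left_ideal :: "nat \<Rightarrow> dop set \<Rightarrow> dop set" for N S where
  zero: "(\<lambda>g x. 0) \<in> left_ideal N S"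
| step: "r \<in> diffops N \<Longrightarrow> s \<in> S \<Longrightarrow> J \<in> left_ideal N S \<Longrightarrow>
         (\<lambda>g x. (r \<circ> s) g x + J g x) \<in> left_ideal N S"

definition same_opset :: "nat \<Rightarrow> dop set \<Rightarrow> dop set \<Rightarrow> bool" where
  "same_opset N I J \<longleftrightarrow> (\<forall>P\<in>I. \<exists>Q\<in>J. op_eq N P Q) \<and> (\<forall>Q\<in>J. \<exists>P\<in>I. op_eq N P Q)"

definition Mop :: "(nat \<Rightarrow> complex) \<Rightarrow> nat \<Rightarrow> nat \<Rightarrow> dop" where
  "Mop \<alpha> p q = (\<lambda>g x. pd p (pd q g) x + \<alpha> q / (x p - x q) * pd p g x
                        + \<alpha> p / (x q - x p) * pd q g x)"

end

theory Submission
  imports Defs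
begin

lemma Ureg_D: "x \<in> Ureg N \<Longrightarrow> a \<in> {1..N} \<Longrightarrow> b \<in> {1..N} \<Longrightarrow> a \<noteq> b \<Longrightarrow> x a \<noteq> x b"
  unfolding Ureg_def mem_Collect_eq by metis

lemma Ureg_upd_ev:
  assumes "x \<in> Ureg N" "p \<in> {1..N}"
  shows "\<forall>\<^sub>F t in nhds (x p). x(p:=t) \<in> Ureg N"
proof -
  define S where "S = - (x ` ({1..N} - {p}))"
  have o: "open S" unfolding S_def
    by (rule open_Compl, rule finite_imp_closed) simp
  have "\<forall>b\<in>{1..N}. b\<noteq>p \<longrightarrow> x p \<noteq> x b" using assms Ureg_D by metis
  then have xp: "x p \<in> S" unfolding S_def by auto
  have in_S: "x(p:=t) \<in> Ureg N" if t: "t \<in> S" for t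
    unfolding Ureg_def
  proof (intro CollectI ballI impI)
    fix a b assume ab: "a \<in> {1..N}" "b \<in> {1..N}" "a \<noteq> b"
    have tb: "t \<noteq> x c" if "c \<in> {1..N}" "c \<noteq> p" for c
      using t that unfolding S_def by auto
    show "(x(p:=t)) a \<noteq> (x(p:=t)) b"
    proof (cases "a = p")
      case True
      then show ?thesis using ab tb[of b] by simp
    next
      case False
      show ?thesis
      proof (cases "b = p")
        case True
        then show ?thesis using ab tb[of a] False by auto
      next
        case False2: False
        then show ?thesis using ab False Ureg_D[OF assms(1) ab] by simp
      qed
    qed
  qed
  show ?thesis unfolding eventually_nhds using o xp in_S by blast
qed

lemma pd_cong:
  assumes "\<forall>y\<in>Ureg N. f y = g y" "x \<in> Ureg N" "p \<in> {1..N}"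
  shows "pd p f x = pd p g x"
  unfolding pd_def using Ureg_upd_ev[OF assms(2,3)]
  by (intro deriv_cong_ev) (auto elim: eventually_mono simp: assms(1))

lemma dinv1: "(c::complex) \<noteq> d \<Longrightarrow> ((\<lambda>t. 1 / (t - d)) has_field_derivative (-1) * (1/(c - d)) * (1/(c-d))) (at c)"
  apply (rule derivative_eq_intros refl | simp)+ done
lemma dinv2: "(c::complex) \<noteq> d \<Longrightarrow> ((\<lambda>t. 1 / (c - t)) has_field_derivative 1 * (1/(c - d)) * (1/(c-d))) (at d)"
  apply (rule derivative_eq_intros refl | simp)+ done

lemma coeff_deriv:
  assumes "h \<in> coeff_ring N" "p \<in> {1..N}"
  shows "\<exists>h'\<in>coeff_ring N. \<forall>x\<in>Ureg N. ((\<lambda>t. h (x(p:=t))) has_field_derivative h' x) (at (x p))"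
  using assms(1)
proof induction
  case (const c)
  then show ?case by (intro bexI[of _ "\<lambda>x. 0"] coeff_ring.const) auto
next
  case (var i)
  show ?case
  proof (cases "i = p")
    case True
    then show ?thesis by (intro bexI[of _ "\<lambda>x. 1"] coeff_ring.const) (auto intro: DERIV_ident)
  next
    case False
    then show ?thesis by (intro bexI[of _ "\<lambda>x. 0"] coeff_ring.const) auto
  qed
next
  case (inv a b)
  have ia: "(\<lambda>x. (-1) * (1/(x a - x b)) * (1/(x a - x b))) \<in> coeff_ring N"
    using inv by (intro coeff_ring.mult coeff_ring.inv coeff_ring.const)
  have ib: "(\<lambda>x. 1 * (1/(x a - x b)) * (1/(x a - x b))) \<in> coeff_ring N"
    using inv by (intro coeff_ring.mult coeff_ring.inv coeff_ring.const)
  consider "p = a" | "p = b" | "p \<noteq> a" "p \<noteq> b" by blast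
  then show ?case
  proof cases
    case 1
    show ?thesis
    proof (intro bexI[OF _ ia] ballI)
      fix x assume "x \<in> Ureg N"
      then have "x a \<noteq> x b" using inv Ureg_D by metis
      then show "((\<lambda>t. 1 / ((x(p:=t)) a - (x(p:=t)) b)) has_field_derivative (-1) * (1/(x a - x b)) * (1/(x a - x b))) (at (x p))"
        using 1 inv dinv1[of "x a" "x b"] by simp
    qed
  next
    case 2
    show ?thesis
    proof (intro bexI[OF _ ib] ballI)
      fix x assume "x \<in> Ureg N"
      then have "x a \<noteq> x b" using inv Ureg_D by metis
      then show "((\<lambda>t. 1 / ((x(p:=t)) a - (x(p:=t)) b)) has_field_derivative 1 * (1/(x a - x b)) * (1/(x a - x b))) (at (x p))"
        using 2 inv dinv2[of "x a" "x b"] by simp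
    qed
  next
    case 3
    then show ?thesis by (intro bexI[of _ "\<lambda>x. 0"] coeff_ring.const) auto
  qed
next
  case (add f g)
  then obtain f' g' where "f' \<in> coeff_ring N" "g' \<in> coeff_ring N"
    and "\<forall>x\<in>Ureg N. ((\<lambda>t. f (x(p:=t))) has_field_derivative f' x) (at (x p))"
        "\<forall>x\<in>Ureg N. ((\<lambda>t. g (x(p:=t))) has_field_derivative g' x) (at (x p))" by blast
  then show ?case by (intro bexI[of _ "\<lambda>x. f' x + g' x"] coeff_ring.add ballI DERIV_add) blast+
next
  case (mult f g)
  then obtain f' g' where "f' \<in> coeff_ring N" "g' \<in> coeff_ring N"
    and "\<forall>x\<in>Ureg N. ((\<lambda>t. f (x(p:=t))) has_field_derivative f' x) (at (x p))"
        "\<forall>x\<in>Ureg N. ((\<lambda>t. g (x(p:=t))) has_field_derivative g' x) (at (x p))" by blast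
  note H = this
  show ?case
  proof (intro bexI[of _ "\<lambda>x. f' x * g x + f x * g' x"] ballI)
    fix x assume x: "x \<in> Ureg N"
    have "((\<lambda>t. f (x(p:=t)) * g (x(p:=t))) has_field_derivative f' x * g (x(p:=x p)) + g' x * f (x(p:=x p))) (at (x p))"
      using H x by (intro DERIV_mult) blast+
    then show "((\<lambda>t. f (x(p:=t)) * g (x(p:=t))) has_field_derivative f' x * g x + f x * g' x) (at (x p))"
      by (simp add: mult.commute)
  qed (use H mult.hyps in \<open>intro coeff_ring.add coeff_ring.mult; blast\<close>)
qed


definition Efn :: "nat \<Rightarrow> fn set" where
  "Efn N = {f. \<exists>h\<in>coeff_ring N. \<forall>x\<in>Ureg N. f x = h x}"

lemma coeff_Efn: "h \<in> coeff_ring N \<Longrightarrow> h \<in> Efn N"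
  unfolding Efn_def by blast

lemma Efn_cong: "f \<in> Efn N \<Longrightarrow> \<forall>x\<in>Ureg N. g x = f x \<Longrightarrow> g \<in> Efn N"
  unfolding Efn_def by auto

lemma Efn_const: "(\<lambda>x. c) \<in> Efn N"
  by (intro coeff_Efn coeff_ring.const)

lemma Efn_inv: "a \<in> {1..N} \<Longrightarrow> b \<in> {1..N} \<Longrightarrow> a \<noteq> b \<Longrightarrow> (\<lambda>x. 1 / (x a - x b)) \<in> Efn N"
  by (intro coeff_Efn coeff_ring.inv)

lemma Efn_add: "f \<in> Efn N \<Longrightarrow> g \<in> Efn N \<Longrightarrow> (\<lambda>x. f x + g x) \<in> Efn N"
proof -
  assume "f \<in> Efn N" "g \<in> Efn N"
  then obtain h1 h2 where "h1 \<in> coeff_ring N" "\<forall>x\<in>Ureg N. f x = h1 x" "h2 \<in> coeff_ring N" "\<forall>x\<in>Ureg N. g x = h2 x"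
    unfolding Efn_def by blast
  then show ?thesis unfolding Efn_def by (intro CollectI bexI[of _ "\<lambda>x. h1 x + h2 x"] coeff_ring.add) auto
qed

lemma Efn_mult: "f \<in> Efn N \<Longrightarrow> g \<in> Efn N \<Longrightarrow> (\<lambda>x. f x * g x) \<in> Efn N"
proof -
  assume "f \<in> Efn N" "g \<in> Efn N"
  then obtain h1 h2 where "h1 \<in> coeff_ring N" "\<forall>x\<in>Ureg N. f x = h1 x" "h2 \<in> coeff_ring N" "\<forall>x\<in>Ureg N. g x = h2 x"
    unfolding Efn_def by blast
  then show ?thesis unfolding Efn_def by (intro CollectI bexI[of _ "\<lambda>x. h1 x * h2 x"] coeff_ring.mult) auto
qed

lemma Efn_div: "a \<in> {1..N} \<Longrightarrow> b \<in> {1..N} \<Longrightarrow> a \<noteq> b \<Longrightarrow> (\<lambda>x. c / (x a - x b)) \<in> Efn N"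
proof -
  assume "a \<in> {1..N}" "b \<in> {1..N}" "a \<noteq> b"
  then have "(\<lambda>x. c * (1 / (x a - x b))) \<in> Efn N" by (intro Efn_mult Efn_const Efn_inv)
  then show ?thesis by simp
qed

lemma Efn_deriv:
  assumes "f \<in> Efn N" "p \<in> {1..N}"
  shows "\<exists>h'\<in>coeff_ring N. \<forall>x\<in>Ureg N. ((\<lambda>t. f (x(p:=t))) has_field_derivative h' x) (at (x p))"
proof -
  obtain h where h: "h \<in> coeff_ring N" "\<forall>x\<in>Ureg N. f x = h x" using assms unfolding Efn_def by blast
  obtain h' where h': "h' \<in> coeff_ring N" "\<forall>x\<in>Ureg N. ((\<lambda>t. h (x(p:=t))) has_field_derivative h' x) (at (x p))"
    using coeff_deriv[OF h(1) assms(2)] by blast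
  show ?thesis
  proof (intro bexI[OF _ h'(1)] ballI)
    fix x assume x: "x \<in> Ureg N"
    have ev: "\<forall>\<^sub>F t in nhds (x p). f (x(p:=t)) = h (x(p:=t))"
      using Ureg_upd_ev[OF x assms(2)] by (rule eventually_mono) (use h(2) in blast)
    show "((\<lambda>t. f (x(p:=t))) has_field_derivative h' x) (at (x p))"
      using h'(2) x by (subst DERIV_cong_ev[OF refl ev refl]) blast
  qed
qed

lemma Efn_has_pd:
  assumes "f \<in> Efn N" "p \<in> {1..N}" "x \<in> Ureg N"
  shows "((\<lambda>t. f (x(p:=t))) has_field_derivative pd p f x) (at (x p))"
proof -
  obtain h' where h': "\<forall>x\<in>Ureg N. ((\<lambda>t. f (x(p:=t))) has_field_derivative h' x) (at (x p))"
    using Efn_deriv[OF assms(1,2)] by blast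
  then have "pd p f x = h' x" unfolding pd_def using assms(3) by (simp add: DERIV_imp_deriv)
  then show ?thesis using h' assms(3) by simp
qed

lemma Efn_pd:
  assumes "f \<in> Efn N" "p \<in> {1..N}"
  shows "pd p f \<in> Efn N"
proof -
  obtain h' where h': "h' \<in> coeff_ring N" "\<forall>x\<in>Ureg N. ((\<lambda>t. f (x(p:=t))) has_field_derivative h' x) (at (x p))"
    using Efn_deriv[OF assms(1,2)] by blast
  then have "\<forall>x\<in>Ureg N. pd p f x = h' x" unfolding pd_def by (simp add: DERIV_imp_deriv)
  then show ?thesis unfolding Efn_def using h'(1) by blast
qed

lemma pd_add:
  assumes "f \<in> Efn N" "g \<in> Efn N" "p \<in> {1..N}" "x \<in> Ureg N"
  shows "pd p (\<lambda>y. f y + g y) x = pd p f x + pd p g x"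
proof -
  have "((\<lambda>t. f (x(p:=t)) + g (x(p:=t))) has_field_derivative pd p f x + pd p g x) (at (x p))"
    using assms by (intro DERIV_add Efn_has_pd)
  then have "deriv (\<lambda>t. f (x(p:=t)) + g (x(p:=t))) (x p) = pd p f x + pd p g x"
    by (rule DERIV_imp_deriv)
  then show ?thesis unfolding pd_def[of p "\<lambda>y. f y + g y"] by simp
qed

lemma pd_mult:
  assumes "f \<in> Efn N" "g \<in> Efn N" "p \<in> {1..N}" "x \<in> Ureg N"
  shows "pd p (\<lambda>y. f y * g y) x = pd p f x * g x + f x * pd p g x"
proof -
  have "((\<lambda>t. f (x(p:=t)) * g (x(p:=t))) has_field_derivative pd p f x * g (x(p:=x p)) + pd p g x * f (x(p:=x p))) (at (x p))"
    using assms by (intro DERIV_mult Efn_has_pd)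
  then have "deriv (\<lambda>t. f (x(p:=t)) * g (x(p:=t))) (x p) = pd p f x * g x + f x * pd p g x"
    by (simp add: DERIV_imp_deriv mult.commute)
  then show ?thesis unfolding pd_def[of p "\<lambda>y. f y * g y"] by simp
qed

lemma pd_const: "pd p (\<lambda>y. c) x = 0"
  unfolding pd_def by simp

lemma pd_coef0: "k \<noteq> i \<Longrightarrow> k \<noteq> j \<Longrightarrow> pd k (\<lambda>y. c / (y i - y j)) x = 0"
  unfolding pd_def by simp

lemma pd_var: "pd q (\<lambda>y. y i) = (\<lambda>y. if i = q then 1 else 0)"
  unfolding pd_def by (rule ext) (auto intro!: DERIV_imp_deriv DERIV_ident)

lemma pd_inv:
  assumes "a \<in> {1..N}" "b \<in> {1..N}" "a \<noteq> b" "q \<in> {1..N}" "x \<in> Ureg N"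
  shows "pd q (\<lambda>y. 1 / (y a - y b)) x = (if q = a then -1 else if q = b then 1 else 0) * (1 / (x a - x b)) * (1 / (x a - x b))"
proof -
  have ne: "x a \<noteq> x b" using assms Ureg_D by metis
  consider "q = a" | "q = b" | "q \<noteq> a" "q \<noteq> b" by blast
  then show ?thesis
  proof cases
    case 1
    then show ?thesis unfolding pd_def using assms(3) by (simp add: DERIV_imp_deriv[OF dinv1[OF ne]])
  next
    case 2
    then show ?thesis unfolding pd_def using assms(3) by (simp add: DERIV_imp_deriv[OF dinv2[OF ne]])
  next
    case 3
    then show ?thesis unfolding pd_def by simp
  qed
qed

lemma pd2_add:
  assumes "f \<in> Efn N" "g \<in> Efn N" "p \<in> {1..N}" "q \<in> {1..N}" "x \<in> Ureg N"
  shows "pd p (pd q (\<lambda>y. f y + g y)) x = pd p (pd q f) x + pd p (pd q g) x"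
proof -
  have "pd p (pd q (\<lambda>y. f y + g y)) x = pd p (\<lambda>y. pd q f y + pd q g y) x"
    using assms by (intro pd_cong ballI pd_add)
  also have "\<dots> = pd p (pd q f) x + pd p (pd q g) x"
    using assms by (intro pd_add Efn_pd)
  finally show ?thesis .
qed

lemma pd2_mult:
  assumes "f \<in> Efn N" "g \<in> Efn N" "p \<in> {1..N}" "q \<in> {1..N}" "x \<in> Ureg N"
  shows "pd p (pd q (\<lambda>y. f y * g y)) x = pd p (pd q f) x * g x + pd q f x * pd p g x
          + (pd p f x * pd q g x + f x * pd p (pd q g) x)"
proof -
  have fq: "pd q f \<in> Efn N" and gq: "pd q g \<in> Efn N" using assms Efn_pd by blast+
  have "\<forall>y\<in>Ureg N. pd q (\<lambda>y. f y * g y) y = pd q f y * g y + f y * pd q g y"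
    using pd_mult[OF assms(1,2,4)] by blast
  then have "pd p (pd q (\<lambda>y. f y * g y)) x = pd p (\<lambda>y. pd q f y * g y + f y * pd q g y) x"
    by (rule pd_cong[OF _ assms(5,3)])
  also have "\<dots> = pd p (\<lambda>y. pd q f y * g y) x + pd p (\<lambda>y. f y * pd q g y) x"
    by (rule pd_add[OF Efn_mult[OF fq assms(2)] Efn_mult[OF assms(1) gq] assms(3,5)])
  also have "pd p (\<lambda>y. pd q f y * g y) x = pd p (pd q f) x * g x + pd q f x * pd p g x"
    by (rule pd_mult[OF fq assms(2) assms(3,5)])
  also have "pd p (\<lambda>y. f y * pd q g y) x = pd p f x * pd q g x + f x * pd p (pd q g) x"
    by (rule pd_mult[OF assms(1) gq assms(3,5)])
  finally show ?thesis .
qed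

lemma comm_coeff:
  assumes "h \<in> coeff_ring N" "p \<in> {1..N}" "q \<in> {1..N}"
  shows "\<forall>x\<in>Ureg N. pd p (pd q h) x = pd q (pd p h) x"
  using assms(1)
proof induction
  case (const c)
  have "pd q (\<lambda>y. c) = (\<lambda>y. 0)" "pd p (\<lambda>y. c) = (\<lambda>y. 0)" by (auto simp: pd_const)
  then show ?case by (simp add: pd_const)
next
  case (var i)
  then show ?case by (simp add: pd_var pd_const)
next
  case (inv a b)
  define u where "u = (\<lambda>y::pt. 1 / (y a - y b))"
  define s where "s = (\<lambda>q. if q = a then -1 else if q = b then 1 else (0::complex))"
  have uE: "u \<in> Efn N" unfolding u_def using inv by (intro Efn_inv)
  have pu: "pd r u y = s r * u y * u y" if "r \<in> {1..N}" "y \<in> Ureg N" for r y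
    unfolding u_def s_def using pd_inv[OF inv that] by simp
  have key: "pd r (pd r' u) x = 2 * s r * s r' * u x * u x * u x"
    if "r \<in> {1..N}" "r' \<in> {1..N}" "x \<in> Ureg N" for r r' x
  proof -
    have "pd r (pd r' u) x = pd r (\<lambda>y. (s r' * u y) * u y) x"
      using that pu[of r'] by (intro pd_cong ballI) (auto simp: mult.assoc)
    also have "\<dots> = pd r (\<lambda>y. s r' * u y) x * u x + (s r' * u x) * pd r u x"
      using that uE by (intro pd_mult Efn_mult Efn_const)
    also have "pd r (\<lambda>y. s r' * u y) x = s r' * pd r u x"
      using that uE by (simp add: pd_mult Efn_const pd_const)
    finally show ?thesis using that by (simp add: pu algebra_simps)
  qed
  show ?case using key[OF assms(2,3)] key[OF assms(3,2)] by (simp add: u_def[symmetric] mult_ac)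
next
  case (add f g)
  show ?case
  proof
    fix x assume x: "x \<in> Ureg N"
    show "pd p (pd q (\<lambda>y. f y + g y)) x = pd q (pd p (\<lambda>y. f y + g y)) x"
      using pd2_add[OF coeff_Efn[OF add.hyps(1)] coeff_Efn[OF add.hyps(2)] assms(2,3) x]
        pd2_add[OF coeff_Efn[OF add.hyps(1)] coeff_Efn[OF add.hyps(2)] assms(3,2) x]
        add.IH x by simp
  qed
next
  case (mult f g)
  show ?case
  proof
    fix x assume x: "x \<in> Ureg N"
    show "pd p (pd q (\<lambda>y. f y * g y)) x = pd q (pd p (\<lambda>y. f y * g y)) x"
      using pd2_mult[OF coeff_Efn[OF mult.hyps(1)] coeff_Efn[OF mult.hyps(2)] assms(2,3) x]
        pd2_mult[OF coeff_Efn[OF mult.hyps(1)] coeff_Efn[OF mult.hyps(2)] assms(3,2) x]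
        mult.IH x by (simp add: algebra_simps)
  qed
qed

lemma comm_Efn:
  assumes "f \<in> Efn N" "p \<in> {1..N}" "q \<in> {1..N}" "x \<in> Ureg N"
  shows "pd p (pd q f) x = pd q (pd p f) x"
proof -
  obtain h where h: "h \<in> coeff_ring N" "\<forall>x\<in>Ureg N. f x = h x" using assms unfolding Efn_def by blast
  have e: "pd r (pd r' f) x = pd r (pd r' h) x" if "r \<in> {1..N}" "r' \<in> {1..N}" for r r'
    using that assms h by (intro pd_cong ballI) auto
  show ?thesis using e[OF assms(2,3)] e[OF assms(3,2)] comm_coeff[OF h(1) assms(2,3)] assms(4) by simp
qed


lemma Mop_E:
  assumes "g \<in> Efn N" "p \<in> {1..N}" "q \<in> {1..N}" "p \<noteq> q"
  shows "Mop \<alpha> p q g \<in> Efn N"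
  unfolding Mop_def using assms
  by (intro Efn_add Efn_mult Efn_div Efn_pd) auto

lemma pd_Mop:
  assumes "g \<in> Efn N" "i \<in> {1..N}" "j \<in> {1..N}" "k \<in> {1..N}" "i \<noteq> j" "k \<noteq> i" "k \<noteq> j" "x \<in> Ureg N"
  shows "pd k (Mop \<alpha> i j g) x = pd k (pd i (pd j g)) x + \<alpha> j / (x i - x j) * pd k (pd i g) x
           + \<alpha> i / (x j - x i) * pd k (pd j g) x"
proof -
  have E1: "(\<lambda>y. pd i (pd j g) y + \<alpha> j / (y i - y j) * pd i g y) \<in> Efn N"
    using assms by (intro Efn_add Efn_mult Efn_div Efn_pd) auto
  have E2: "(\<lambda>y. \<alpha> i / (y j - y i) * pd j g y) \<in> Efn N"
    using assms by (intro Efn_add Efn_mult Efn_div Efn_pd) auto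
  have "pd k (Mop \<alpha> i j g) x = pd k (\<lambda>y. pd i (pd j g) y + \<alpha> j / (y i - y j) * pd i g y) x
        + pd k (\<lambda>y. \<alpha> i / (y j - y i) * pd j g y) x"
    unfolding Mop_def using assms E1 E2 by (intro pd_add) auto
  also have "pd k (\<lambda>y. pd i (pd j g) y + \<alpha> j / (y i - y j) * pd i g y) x
     = pd k (pd i (pd j g)) x + pd k (\<lambda>y. \<alpha> j / (y i - y j) * pd i g y) x"
    using assms by (intro pd_add Efn_mult Efn_div Efn_pd) auto
  also have "pd k (\<lambda>y. \<alpha> j / (y i - y j) * pd i g y) x = \<alpha> j / (x i - x j) * pd k (pd i g) x"
    using assms by (subst pd_mult) (auto intro!: Efn_div Efn_pd simp: pd_coef0)
  also have "pd k (\<lambda>y. \<alpha> i / (y j - y i) * pd j g y) x = \<alpha> i / (x j - x i) * pd k (pd j g) x"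
    using assms by (subst pd_mult) (auto intro!: Efn_div Efn_pd simp: pd_coef0)
  finally show ?thesis .
qed

lemma alg0:
  fixes G3 Gij Gik Gjk Gi Gj Gk U1 V1 W Um Vm Wm ai aj ak :: complex
  assumes "U1 \<noteq> 0" "V1 \<noteq> 0" "W \<noteq> 0" "W = U1 + V1" "Um = - U1" "Vm = - V1" "Wm = - W"
  shows "(G3 + aj/U1 * Gik + ai/Um * Gjk) - (G3 + ak/V1 * Gij + aj/Vm * Gik)
   = - aj * Wm / (U1 * V1) * (Gik + ak/W * Gi + ai/Wm * Gk)
     - ak/V1 * (Gij + aj/U1 * Gi + ai/Um * Gj)
     - ai/U1 * (Gjk + ak/V1 * Gj + aj/Vm * Gk)"
proof -
  have i1: "U1 * inverse U1 = 1" "V1 * inverse V1 = 1" "W * inverse W = 1" using assms(1-3) by auto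
  have i2: "inverse Um = - inverse U1" "inverse Vm = - inverse V1" "inverse (- W) = - inverse W"
    "inverse (U1 * V1) = inverse U1 * inverse V1"
    unfolding assms(5,6) by (simp_all add: inverse_minus_eq)
  show ?thesis unfolding assms(7) divide_inverse i2 using i1 assms(4) by algebra
qed

lemma part1:
  assumes "g \<in> Efn N" "i \<in> {1..N}" "j \<in> {1..N}" "k \<in> {1..N}" "i \<noteq> j" "j \<noteq> k" "i \<noteq> k" "x \<in> Ureg N"
  shows "pd k (Mop \<alpha> i j g) x - pd i (Mop \<alpha> j k g) x =
     - \<alpha> j * (x k - x i) / ((x i - x j) * (x j - x k)) * Mop \<alpha> i k g x
                          - \<alpha> k / (x j - x k) * Mop \<alpha> i j g x
                          - \<alpha> i / (x i - x j) * Mop \<alpha> j k g x"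
proof -
  have c1: "pd k (pd i (pd j g)) x = pd i (pd j (pd k g)) x"
  proof -
    have "pd k (pd i (pd j g)) x = pd i (pd k (pd j g)) x"
      using assms by (intro comm_Efn Efn_pd)
    also have "\<dots> = pd i (pd j (pd k g)) x"
      using assms by (intro pd_cong ballI comm_Efn)
    finally show ?thesis .
  qed
  have c2: "pd k (pd i g) x = pd i (pd k g) x" using assms by (intro comm_Efn)
  have c3: "pd k (pd j g) x = pd j (pd k g) x" using assms by (intro comm_Efn)
  have ne: "x i \<noteq> x j" "x j \<noteq> x k" "x i \<noteq> x k" using assms Ureg_D by metis+
  have L1: "pd k (Mop \<alpha> i j g) x = pd i (pd j (pd k g)) x + \<alpha> j / (x i - x j) * pd i (pd k g) x
           + \<alpha> i / (x j - x i) * pd j (pd k g) x"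
    using pd_Mop[OF assms(1,2,3,4,5) _ _ assms(8)] assms(6,7) c1 c2 c3 by simp
  have L2: "pd i (Mop \<alpha> j k g) x = pd i (pd j (pd k g)) x + \<alpha> k / (x j - x k) * pd i (pd j g) x
           + \<alpha> j / (x k - x j) * pd i (pd k g) x"
    using pd_Mop[OF assms(1,3,4,2,6) _ _ assms(8)] assms(5,7) by simp
  show ?thesis unfolding L1 L2 unfolding Mop_def
    by (rule alg0) (use ne in auto)
qed

lemma solve:
  fixes xi xj xk aj ak ai Lk Li a b c :: complex
  assumes "xi \<noteq> xj" "xj \<noteq> xk" "xi \<noteq> xk" "aj \<noteq> 0"
   "Lk - Li = - aj * (xk - xi) / ((xi - xj) * (xj - xk)) * a - ak / (xj - xk) * b - ai / (xi - xj) * c"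
  shows "a = (-1/aj) * ((xi - xj) * (xj - xk)) * (1/(xk - xi)) * Lk + (1/aj) * ((xi - xj) * (xj - xk)) * (1/(xk - xi)) * Li
     + (-ak/aj) * (xi - xj) * (1/(xk - xi)) * b + (-ai/aj) * (xj - xk) * (1/(xk - xi)) * c"
proof -
  have i1: "(xi - xj) * inverse (xi - xj) = 1" "(xj - xk) * inverse (xj - xk) = 1"
    "(xk - xi) * inverse (xk - xi) = 1" "aj * inverse aj = 1" using assms(1-4) by auto
  have i2: "inverse ((xi - xj) * (xj - xk)) = inverse (xi - xj) * inverse (xj - xk)"
    by (simp add: inverse_mult_distrib)
  have e: "Lk - Li = - aj * (xk - xi) * (inverse (xi - xj) * inverse (xj - xk)) * a - ak * inverse (xj - xk) * b - ai * inverse (xi - xj) * c"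
    using assms(5) unfolding divide_inverse i2 .
  show ?thesis unfolding divide_inverse using i1 e by algebra
qed

definition good :: "nat \<Rightarrow> dop \<Rightarrow> bool" where
  "good N P \<longleftrightarrow> (\<forall>g\<in>Efn N. P g \<in> Efn N)
     \<and> (\<forall>f g. f \<in> Efn N \<longrightarrow> g \<in> Efn N \<longrightarrow> (\<forall>x\<in>Ureg N. f x = g x) \<longrightarrow> (\<forall>x\<in>Ureg N. P f x = P g x))
     \<and> (\<forall>f g. f \<in> Efn N \<longrightarrow> g \<in> Efn N \<longrightarrow> (\<forall>x\<in>Ureg N. P (\<lambda>y. f y + g y) x = P f x + P g x))"

definition eqE :: "nat \<Rightarrow> dop \<Rightarrow> dop \<Rightarrow> bool" where
  "eqE N P Q \<longleftrightarrow> (\<forall>g\<in>Efn N. \<forall>x\<in>Ureg N. P g x = Q g x)"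

lemma goodI:
  assumes "\<And>g. g \<in> Efn N \<Longrightarrow> P g \<in> Efn N"
    and "\<And>f g x. f \<in> Efn N \<Longrightarrow> g \<in> Efn N \<Longrightarrow> \<forall>x\<in>Ureg N. f x = g x \<Longrightarrow> x \<in> Ureg N \<Longrightarrow> P f x = P g x"
    and "\<And>f g x. f \<in> Efn N \<Longrightarrow> g \<in> Efn N \<Longrightarrow> x \<in> Ureg N \<Longrightarrow> P (\<lambda>y. f y + g y) x = P f x + P g x"
  shows "good N P"
  unfolding good_def using assms by blast

lemma goodD1: "good N P \<Longrightarrow> g \<in> Efn N \<Longrightarrow> P g \<in> Efn N"
  unfolding good_def by blast

lemma goodD2: "good N P \<Longrightarrow> f \<in> Efn N \<Longrightarrow> g \<in> Efn N \<Longrightarrow> \<forall>x\<in>Ureg N. f x = g x \<Longrightarrow> x \<in> Ureg N \<Longrightarrow> P f x = P g x"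
  unfolding good_def by blast

lemma goodD3: "good N P \<Longrightarrow> f \<in> Efn N \<Longrightarrow> g \<in> Efn N \<Longrightarrow> x \<in> Ureg N \<Longrightarrow> P (\<lambda>y. f y + g y) x = P f x + P g x"
  unfolding good_def by blast

lemma good_mulop: "f \<in> coeff_ring N \<Longrightarrow> good N (mulop f)"
proof (rule goodI)
  fix g :: fn assume "f \<in> coeff_ring N" "g \<in> Efn N"
  then show "mulop f g \<in> Efn N" unfolding mulop_def by (intro Efn_mult[OF coeff_Efn])
next
  fix g h :: fn and x assume "\<forall>x\<in>Ureg N. g x = h x" "x \<in> Ureg N"
  then show "mulop f g x = mulop f h x" unfolding mulop_def by simp
next
  fix g h :: fn and x :: pt
  show "mulop f (\<lambda>y. g y + h y) x = mulop f g x + mulop f h x"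
    unfolding mulop_def by (simp add: distrib_left)
qed

lemma good_pd: "p \<in> {1..N} \<Longrightarrow> good N (pd p)"
proof (rule goodI)
  fix g :: fn assume "p \<in> {1..N}" "g \<in> Efn N"
  then show "pd p g \<in> Efn N" by (intro Efn_pd)
next
  fix g h :: fn and x assume "p \<in> {1..N}" "\<forall>x\<in>Ureg N. g x = h x" "x \<in> Ureg N"
  then show "pd p g x = pd p h x" by (intro pd_cong)
next
  fix g h :: fn and x assume "p \<in> {1..N}" "g \<in> Efn N" "h \<in> Efn N" "x \<in> Ureg N"
  then show "pd p (\<lambda>y. g y + h y) x = pd p g x + pd p h x" by (intro pd_add)
qed

lemma good_add: "good N P \<Longrightarrow> good N Q \<Longrightarrow> good N (\<lambda>g x. P g x + Q g x)"
proof (rule goodI)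
  fix g :: fn assume a: "good N P" "good N Q" "g \<in> Efn N"
  show "(\<lambda>x. P g x + Q g x) \<in> Efn N" by (rule Efn_add[OF goodD1[OF a(1,3)] goodD1[OF a(2,3)]])
next
  fix g h :: fn and x assume a: "good N P" "good N Q" "g \<in> Efn N" "h \<in> Efn N" "\<forall>x\<in>Ureg N. g x = h x" "x \<in> Ureg N"
  show "P g x + Q g x = P h x + Q h x"
    using goodD2[OF a(1,3,4,5,6)] goodD2[OF a(2,3,4,5,6)] by simp
next
  fix g h :: fn and x assume a: "good N P" "good N Q" "g \<in> Efn N" "h \<in> Efn N" "x \<in> Ureg N"
  show "P (\<lambda>y. g y + h y) x + Q (\<lambda>y. g y + h y) x = (P g x + Q g x) + (P h x + Q h x)"
    using goodD3[OF a(1,3,4,5)] goodD3[OF a(2,3,4,5)] by (simp add: algebra_simps)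
qed

lemma good_comp: "good N P \<Longrightarrow> good N Q \<Longrightarrow> good N (P \<circ> Q)"
proof (rule goodI)
  fix g :: fn assume a: "good N P" "good N Q" "g \<in> Efn N"
  show "(P \<circ> Q) g \<in> Efn N" unfolding comp_def by (rule goodD1[OF a(1) goodD1[OF a(2,3)]])
next
  fix g h :: fn and x assume a: "good N P" "good N Q" "g \<in> Efn N" "h \<in> Efn N" "\<forall>x\<in>Ureg N. g x = h x" "x \<in> Ureg N"
  have "\<forall>y\<in>Ureg N. Q g y = Q h y" using goodD2[OF a(2,3,4,5)] by blast
  then show "(P \<circ> Q) g x = (P \<circ> Q) h x"
    unfolding comp_def using goodD2[OF a(1) goodD1[OF a(2,3)] goodD1[OF a(2,4)] _ a(6)] by blast
next
  fix g h :: fn and x assume a: "good N P" "good N Q" "g \<in> Efn N" "h \<in> Efn N" "x \<in> Ureg N"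
  have gh: "(\<lambda>y. g y + h y) \<in> Efn N" using a by (intro Efn_add)
  have Qgh: "(\<lambda>y. Q g y + Q h y) \<in> Efn N" by (rule Efn_add[OF goodD1[OF a(2,3)] goodD1[OF a(2,4)]])
  have "\<forall>y\<in>Ureg N. Q (\<lambda>y. g y + h y) y = Q g y + Q h y" using goodD3[OF a(2,3,4)] by blast
  then have "P (Q (\<lambda>y. g y + h y)) x = P (\<lambda>y. Q g y + Q h y) x"
    using goodD2[OF a(1) goodD1[OF a(2) gh] Qgh _ a(5)] by blast
  also have "\<dots> = P (Q g) x + P (Q h) x"
    using goodD3[OF a(1) goodD1[OF a(2,3)] goodD1[OF a(2,4)] a(5)] .
  finally show "(P \<circ> Q) (\<lambda>y. g y + h y) x = (P \<circ> Q) g x + (P \<circ> Q) h x" by simp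
qed

lemma good_zero: "good N (\<lambda>g x. 0)"
  by (rule goodI) (simp_all add: Efn_const)

lemma diffops_good: "r \<in> diffops N \<Longrightarrow> good N r"
proof (induction rule: diffops.induct)
  case (coeff f)
  then show ?case by (rule good_mulop)
next
  case (der p)
  then show ?case by (rule good_pd)
next
  case (add P Q)
  show ?case by (rule good_add[OF add.IH])
next
  case (comp P Q)
  show ?case by (rule good_comp[OF comp.IH])
qed

lemma good_Mop:
  assumes "p \<in> {1..N}" "q \<in> {1..N}" "p \<noteq> q"
  shows "good N (Mop \<alpha> p q)"
proof (rule goodI)
  fix g :: fn assume "g \<in> Efn N"
  then show "Mop \<alpha> p q g \<in> Efn N" using assms by (intro Mop_E)
next
  fix f g :: fn and x assume a: "f \<in> Efn N" "g \<in> Efn N" "\<forall>x\<in>Ureg N. f x = g x" "x \<in> Ureg N"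
  have b: "\<forall>x\<in>Ureg N. pd q f x = pd q g x" using a(3) assms(2) by (auto intro: pd_cong)
  have c: "pd p f x = pd p g x" using a(3,4) assms(1) by (rule pd_cong)
  have d: "pd p (pd q f) x = pd p (pd q g) x" using b a(4) assms(1) by (rule pd_cong)
  show "Mop \<alpha> p q f x = Mop \<alpha> p q g x" unfolding Mop_def using b a(4) c d by simp
next
  fix f g :: fn and x assume a: "f \<in> Efn N" "g \<in> Efn N" "x \<in> Ureg N"
  show "Mop \<alpha> p q (\<lambda>y. f y + g y) x = Mop \<alpha> p q f x + Mop \<alpha> p q g x"
    unfolding Mop_def using pd2_add[OF a(1,2) assms(1,2) a(3)] pd_add[OF a(1,2) assms(1) a(3)]
      pd_add[OF a(1,2) assms(2) a(3)] by (simp add: algebra_simps)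
qed

lemma ideal_good:
  assumes S: "\<forall>s\<in>S. good N s" and P: "P \<in> left_ideal N S"
  shows "good N P"
  using P
proof (induction rule: left_ideal.induct)
  case zero
  then show ?case by (rule good_zero)
next
  case (step r s J)
  have "good N s" using S step.hyps(2) by blast
  then show ?case using good_add[OF good_comp[OF diffops_good[OF step.hyps(1)]] step.IH] by blast
qed

lemma ideal_add:
  assumes "Q1 \<in> left_ideal N S" "Q2 \<in> left_ideal N S"
  shows "\<exists>Q\<in>left_ideal N S. eqE N (\<lambda>g x. Q1 g x + Q2 g x) Q"
  using assms(1)
proof induction
  case zero
  have "eqE N (\<lambda>g x. 0 + Q2 g x) Q2" unfolding eqE_def by simp
  then show ?case using assms(2) by blast
next
  case (step r s J)
  then obtain Q' where Q': "Q' \<in> left_ideal N S" "eqE N (\<lambda>g x. J g x + Q2 g x) Q'" by blast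
  have "eqE N (\<lambda>g x. (\<lambda>g x. (r \<circ> s) g x + J g x) g x + Q2 g x) (\<lambda>g x. (r \<circ> s) g x + Q' g x)"
    using Q'(2) unfolding eqE_def by (simp add: add.assoc)
  moreover have "(\<lambda>g x. (r \<circ> s) g x + Q' g x) \<in> left_ideal N S"
    using step(1,2) Q'(1) by (rule left_ideal.step)
  ultimately show ?case by blast
qed

lemma ideal_comp:
  assumes S: "\<forall>s\<in>S. good N s" and "Q \<in> left_ideal N S" and r: "r \<in> diffops N"
  shows "\<exists>Q'\<in>left_ideal N S. eqE N (r \<circ> Q) Q'"
  using assms(2)
proof induction
  case zero
  have gr: "good N r" using diffops_good[OF r] .
  have "r (\<lambda>y. 0 + 0) x = r (\<lambda>y. 0) x + r (\<lambda>y. 0) x" if "x \<in> Ureg N" for x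
    using goodD3[OF gr Efn_const Efn_const that] .
  then have "r (\<lambda>y. 0) x = 0" if "x \<in> Ureg N" for x using that by simp
  then have "eqE N (r \<circ> (\<lambda>g x. 0)) (\<lambda>g x. 0)" unfolding eqE_def by simp
  then show ?case using left_ideal.zero by blast
next
  case (step r1 s J)
  then obtain Q' where Q': "Q' \<in> left_ideal N S" "eqE N (r \<circ> J) Q'" by blast
  have gr: "good N r" using diffops_good[OF r] .
  have "good N s" using step(2) S by blast
  then have g1: "good N (r1 \<circ> s)" by (rule good_comp[OF diffops_good[OF step(1)]])
  have gJ: "good N J" using ideal_good[OF S step(3)] .
  have "eqE N (r \<circ> (\<lambda>g x. (r1 \<circ> s) g x + J g x)) (\<lambda>g x. ((r \<circ> r1) \<circ> s) g x + Q' g x)"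
    unfolding eqE_def
  proof (intro ballI)
    fix g x assume g: "g \<in> Efn N" and x: "x \<in> Ureg N"
    have "r (\<lambda>y. (r1 \<circ> s) g y + J g y) x = r ((r1 \<circ> s) g) x + r (J g) x"
      using goodD3[OF gr goodD1[OF g1 g] goodD1[OF gJ g] x] .
    moreover have "r (J g) x = Q' g x" using Q'(2) g x unfolding eqE_def by simp
    ultimately show "(r \<circ> (\<lambda>g x. (r1 \<circ> s) g x + J g x)) g x = ((r \<circ> r1) \<circ> s) g x + Q' g x"
      by simp
  qed
  moreover have "(\<lambda>g x. ((r \<circ> r1) \<circ> s) g x + Q' g x) \<in> left_ideal N S"
    using diffops.comp[OF r step(1)] step(2) Q'(1) by (rule left_ideal.step)
  ultimately show ?case by blast
qed

definition Cl :: "nat \<Rightarrow> dop set \<Rightarrow> dop set" where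
  "Cl N S = {P. \<exists>Q\<in>left_ideal N S. eqE N P Q}"

lemma Cl_comp:
  assumes S: "\<forall>s\<in>S. good N s" and P: "P \<in> Cl N S" and r: "r \<in> diffops N"
  shows "r \<circ> P \<in> Cl N S"
proof -
  obtain Q where Q: "Q \<in> left_ideal N S" "eqE N P Q" using P unfolding Cl_def by blast
  have gQ: "good N Q" using ideal_good[OF S Q(1)] .
  have gr: "good N r" using diffops_good[OF r] .
  have "eqE N (r \<circ> P) (r \<circ> Q)" unfolding eqE_def
  proof (intro ballI)
    fix g x assume g: "g \<in> Efn N" and x: "x \<in> Ureg N"
    have QE: "Q g \<in> Efn N" using goodD1[OF gQ g] .
    have eq: "\<forall>y\<in>Ureg N. P g y = Q g y" using Q(2) g unfolding eqE_def by blast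
    have PE: "P g \<in> Efn N" using Efn_cong[OF QE eq] .
    show "(r \<circ> P) g x = (r \<circ> Q) g x" using goodD2[OF gr PE QE eq x] by simp
  qed
  moreover obtain Q' where "Q' \<in> left_ideal N S" "eqE N (r \<circ> Q) Q'" using ideal_comp[OF S Q(1) r] by blast
  ultimately show ?thesis unfolding Cl_def eqE_def by auto
qed

lemma Cl_add:
  assumes "P1 \<in> Cl N S" "P2 \<in> Cl N S"
  shows "(\<lambda>g x. P1 g x + P2 g x) \<in> Cl N S"
proof -
  obtain Q1 Q2 where Q: "Q1 \<in> left_ideal N S" "eqE N P1 Q1" "Q2 \<in> left_ideal N S" "eqE N P2 Q2"
    using assms unfolding Cl_def by blast
  obtain Q where "Q \<in> left_ideal N S" "eqE N (\<lambda>g x. Q1 g x + Q2 g x) Q" using ideal_add[OF Q(1,3)] by blast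
  then show ?thesis using Q unfolding Cl_def eqE_def by auto
qed

lemma Cl_eq: "P \<in> Cl N S \<Longrightarrow> eqE N P' P \<Longrightarrow> P' \<in> Cl N S"
  unfolding Cl_def eqE_def by auto

lemma Cl_gen: "s \<in> S \<Longrightarrow> s \<in> Cl N S"
proof -
  assume s: "s \<in> S"
  have "(\<lambda>g x. (mulop (\<lambda>x. 1) \<circ> s) g x + (\<lambda>g x. 0) g x) \<in> left_ideal N S"
    by (rule left_ideal.step[OF diffops.coeff[OF coeff_ring.const] s left_ideal.zero])
  moreover have "eqE N s (\<lambda>g x. (mulop (\<lambda>x. 1) \<circ> s) g x + (\<lambda>g x. 0) g x)" unfolding eqE_def mulop_def by simp
  ultimately show ?thesis unfolding Cl_def by blast
qed

lemma coeff_diff: "i \<in> {1..N} \<Longrightarrow> j \<in> {1..N} \<Longrightarrow> (\<lambda>x. x i - x j) \<in> coeff_ring N"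
proof -
  assume "i \<in> {1..N}" "j \<in> {1..N}"
  then have "(\<lambda>x. x i + (-1) * x j) \<in> coeff_ring N"
    by (intro coeff_ring.add coeff_ring.mult coeff_ring.var coeff_ring.const)
  then show ?thesis by simp
qed

lemma Mop_sym:
  assumes "g \<in> Efn N" "p \<in> {1..N}" "q \<in> {1..N}" "x \<in> Ureg N"
  shows "Mop \<alpha> p q g x = Mop \<alpha> q p g x"
  unfolding Mop_def using comm_Efn[OF assms] by (simp add: add_ac)

lemma Mop_step:
  assumes T: "\<forall>s\<in>T. good N s" and al: "\<alpha> j \<noteq> 0"
    and ijk: "i \<in> {1..N}" "j \<in> {1..N}" "k \<in> {1..N}" "i \<noteq> j" "j \<noteq> k" "i \<noteq> k"
    and M1: "Mop \<alpha> i j \<in> Cl N T" and M2: "Mop \<alpha> j k \<in> Cl N T"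
  shows "Mop \<alpha> i k \<in> Cl N T"
proof -
  define c1 where "c1 = (\<lambda>x::pt. (-1/\<alpha> j) * ((x i - x j) * (x j - x k)) * (1/(x k - x i)))"
  define c2 where "c2 = (\<lambda>x::pt. (1/\<alpha> j) * ((x i - x j) * (x j - x k)) * (1/(x k - x i)))"
  define c3 where "c3 = (\<lambda>x::pt. (-\<alpha> k/\<alpha> j) * (x i - x j) * (1/(x k - x i)))"
  define c4 where "c4 = (\<lambda>x::pt. (-\<alpha> i/\<alpha> j) * (x j - x k) * (1/(x k - x i)))"
  have cs: "c1 \<in> coeff_ring N" "c2 \<in> coeff_ring N" "c3 \<in> coeff_ring N" "c4 \<in> coeff_ring N"
    unfolding c1_def c2_def c3_def c4_def using ijk
    by (intro coeff_ring.mult coeff_ring.const coeff_diff coeff_ring.inv; simp)+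
  have A1: "mulop c1 \<circ> (pd k \<circ> Mop \<alpha> i j) \<in> Cl N T"
    using cs ijk by (intro Cl_comp[OF T] M1 diffops.coeff diffops.der)
  have A2: "mulop c2 \<circ> (pd i \<circ> Mop \<alpha> j k) \<in> Cl N T"
    using cs ijk by (intro Cl_comp[OF T] M2 diffops.coeff diffops.der)
  have A3: "mulop c3 \<circ> Mop \<alpha> i j \<in> Cl N T"
    using cs ijk by (intro Cl_comp[OF T] M1 diffops.coeff diffops.der)
  have A4: "mulop c4 \<circ> Mop \<alpha> j k \<in> Cl N T"
    using cs ijk by (intro Cl_comp[OF T] M2 diffops.coeff diffops.der)
  have S: "(\<lambda>g x. (\<lambda>g x. (\<lambda>g x. (mulop c1 \<circ> (pd k \<circ> Mop \<alpha> i j)) g x + (mulop c2 \<circ> (pd i \<circ> Mop \<alpha> j k)) g x) g x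
      + (mulop c3 \<circ> Mop \<alpha> i j) g x) g x + (mulop c4 \<circ> Mop \<alpha> j k) g x) \<in> Cl N T"
    by (intro Cl_add A1 A2 A3 A4)
  have "eqE N (Mop \<alpha> i k) (\<lambda>g x. (\<lambda>g x. (\<lambda>g x. (mulop c1 \<circ> (pd k \<circ> Mop \<alpha> i j)) g x + (mulop c2 \<circ> (pd i \<circ> Mop \<alpha> j k)) g x) g x
      + (mulop c3 \<circ> Mop \<alpha> i j) g x) g x + (mulop c4 \<circ> Mop \<alpha> j k) g x)"
    unfolding eqE_def
  proof (intro ballI)
    fix g x assume g: "g \<in> Efn N" and x: "x \<in> Ureg N"
    have ne: "x i \<noteq> x j" "x j \<noteq> x k" "x i \<noteq> x k" using ijk x Ureg_D by metis+
    have e: "pd k (Mop \<alpha> i j g) x - pd i (Mop \<alpha> j k g) x =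
     - \<alpha> j * (x k - x i) / ((x i - x j) * (x j - x k)) * Mop \<alpha> i k g x
                          - \<alpha> k / (x j - x k) * Mop \<alpha> i j g x
                          - \<alpha> i / (x i - x j) * Mop \<alpha> j k g x"
      using part1[OF g ijk x] .
    show "Mop \<alpha> i k g x = (\<lambda>g x. (\<lambda>g x. (\<lambda>g x. (mulop c1 \<circ> (pd k \<circ> Mop \<alpha> i j)) g x + (mulop c2 \<circ> (pd i \<circ> Mop \<alpha> j k)) g x) g x
      + (mulop c3 \<circ> Mop \<alpha> i j) g x) g x + (mulop c4 \<circ> Mop \<alpha> j k) g x) g x"
      using solve[OF ne al e] unfolding mulop_def c1_def c2_def c3_def c4_def by simp
  qed
  then show ?thesis using Cl_eq[OF S] by blast
qed

theorem mainTheorem8: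
  fixes N :: nat and \<alpha> :: "nat \<Rightarrow> complex"
  shows "(\<forall>i\<in>{1..N}. \<forall>j\<in>{1..N}. \<forall>k\<in>{1..N}. i \<noteq> j \<and> j \<noteq> k \<and> i \<noteq> k \<longrightarrow>
           op_eq N (\<lambda>g x. pd k (Mop \<alpha> i j g) x - pd i (Mop \<alpha> j k g) x)
                   (\<lambda>g x. - \<alpha> j * (x k - x i) / ((x i - x j) * (x j - x k)) * Mop \<alpha> i k g x
                          - \<alpha> k / (x j - x k) * Mop \<alpha> i j g x
                          - \<alpha> i / (x i - x j) * Mop \<alpha> j k g x))
       \<and> ((\<forall>j\<in>{1..N}. \<alpha> j \<noteq> 0) \<longrightarrow>
           same_opset N
             (left_ideal N {Mop \<alpha> p q | p q. p \<in> {1..N} \<and> q \<in> {1..N} \<and> p \<noteq> q})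
             (left_ideal N {Mop \<alpha> p (p + 1) | p. 1 \<le> p \<and> p + 1 \<le> N}))"
proof (intro conjI impI)
  show "\<forall>i\<in>{1..N}. \<forall>j\<in>{1..N}. \<forall>k\<in>{1..N}. i \<noteq> j \<and> j \<noteq> k \<and> i \<noteq> k \<longrightarrow>
           op_eq N (\<lambda>g x. pd k (Mop \<alpha> i j g) x - pd i (Mop \<alpha> j k g) x)
                   (\<lambda>g x. - \<alpha> j * (x k - x i) / ((x i - x j) * (x j - x k)) * Mop \<alpha> i k g x
                          - \<alpha> k / (x j - x k) * Mop \<alpha> i j g x
                          - \<alpha> i / (x i - x j) * Mop \<alpha> j k g x)"
    unfolding op_eq_def using part1 coeff_Efn by blast
next
  assume al: "\<forall>j\<in>{1..N}. \<alpha> j \<noteq> 0"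
  define A where "A = {Mop \<alpha> p q | p q. p \<in> {1..N} \<and> q \<in> {1..N} \<and> p \<noteq> q}"
  define T where "T = {Mop \<alpha> p (p + 1) | p. 1 \<le> p \<and> p + 1 \<le> N}"
  have TA: "T \<subseteq> A" unfolding T_def A_def by force
  have Tg: "\<forall>s\<in>T. good N s" unfolding T_def by (auto intro!: good_Mop)
  have chain: "1 \<le> p \<longrightarrow> p + 1 + d \<le> N \<longrightarrow> Mop \<alpha> p (p + 1 + d) \<in> Cl N T" for p d
  proof (induction d)
    case 0
    show ?case unfolding T_def by (auto intro!: Cl_gen)
  next
    case (Suc d)
    show ?case
    proof (intro impI)
      assume p: "1 \<le> p" "p + 1 + Suc d \<le> N"
      have M1: "Mop \<alpha> p (p + 1 + d) \<in> Cl N T" using Suc p by simp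
      have M2: "Mop \<alpha> (p + 1 + d) (p + 1 + d + 1) \<in> Cl N T"
        using p unfolding T_def by (intro Cl_gen) auto
      have "Mop \<alpha> p (p + 1 + d + 1) \<in> Cl N T"
        using p al by (intro Mop_step[OF Tg _ _ _ _ _ _ _ M1 M2]) auto
      then show "Mop \<alpha> p (p + 1 + Suc d) \<in> Cl N T" by simp
    qed
  qed
  have lt: "Mop \<alpha> p q \<in> Cl N T" if "p \<in> {1..N}" "q \<in> {1..N}" "p < q" for p q
    using chain[of p "q - p - 1"] that by simp
  have gen: "Mop \<alpha> p q \<in> Cl N T" if "p \<in> {1..N}" "q \<in> {1..N}" "p \<noteq> q" for p q
  proof (cases "p < q")
    case True
    then show ?thesis using lt that by blast
  next
    case False
    then have "Mop \<alpha> q p \<in> Cl N T" using lt that by simp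
    moreover have "eqE N (Mop \<alpha> p q) (Mop \<alpha> q p)" unfolding eqE_def using Mop_sym that by blast
    ultimately show ?thesis by (rule Cl_eq)
  qed
  have genA: "\<forall>s\<in>A. s \<in> Cl N T" unfolding A_def using gen by blast
  have zeroC: "(\<lambda>g x. 0) \<in> Cl N T" unfolding Cl_def eqE_def by (auto intro: left_ideal.zero)
  have 1: "P \<in> Cl N T" if "P \<in> left_ideal N A" for P
    using that
  proof induction
    case zero
    then show ?case by (rule zeroC)
  next
    case (step r s J)
    have "r \<circ> s \<in> Cl N T" using step genA by (intro Cl_comp[OF Tg]) auto
    then show ?case using step Cl_add by blast
  qed
  have 2: "P \<in> left_ideal N A" if "P \<in> left_ideal N T" for P
    using that
  proof induction
    case zero
    show ?case by (rule left_ideal.zero)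
  next
    case (step r s J)
    have "s \<in> A" using TA step.hyps(2) by blast
    then show ?case by (rule left_ideal.step[OF step.hyps(1) _ step.IH])
  qed
  show "same_opset N (left_ideal N A) (left_ideal N T)"
    unfolding same_opset_def op_eq_def
  proof (intro conjI ballI)
    fix P assume "P \<in> left_ideal N A"
    then obtain Q where "Q \<in> left_ideal N T" "eqE N P Q" using 1 unfolding Cl_def by blast
    then show "\<exists>Q\<in>left_ideal N T. \<forall>g\<in>coeff_ring N. \<forall>x\<in>Ureg N. P g x = Q g x"
      unfolding eqE_def using coeff_Efn by blast
  next
    fix Q assume "Q \<in> left_ideal N T"
    then show "\<exists>P\<in>left_ideal N A. \<forall>g\<in>coeff_ring N. \<forall>x\<in>Ureg N. P g x = Q g x"
      using 2 by blast
  qed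
qed

end
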